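(* Let $M\ge2$, $a_1,\dots,a_{M-1}\in\mathbb{C}$, let $\epsilon=1/\eta$ be a small complex parameter varying in a punctured neighborhood $V^*$ of $0$, and let $K\subset\mathbb{C}\setminus\{0\}$ be compact. Then the Euler–Cauchy equation $$z^Mv^{(M)}(z,\eta)+\sum_{k=1}^{M-1}a_kz^kv^{(k)}(z,\eta)-\eta^Mv(z,\eta)=0$$ has $M$ linearly independent WKB-solutions of the form $\psi_j=\exp\big[\sum_{k=0}^{\infty}h_{j,k}\epsilon^{k-1}\ln z\big]$, $\epsilon\in V^*$, $j=1,\dots,M$, where $h_{j,0}$ are the $M$ distinct $M$-th roots of $1$ and $h_{j,k}\in\mathbb{C}$, and the series $\sum_k h_{j,k}\epsilon^{k-1}$ converge, so that $\psi_j$ are convergent for all $z\in K$ and $\epsilon$ in a punctured neighborhood of $0$.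
   Context: For this operator ($\rho_M=z^M$) the relevant domain is $\Omega=\mathbb{C}\setminus\{0\}$; $\ln z$ denotes a branch of the logarithm. *)

theory Defs
  imports "HOL-Complex_Analysis.Complex_Analysis"
begin

definition euler_cauchy_lhs ::
  "nat \<Rightarrow> (nat \<Rightarrow> complex) \<Rightarrow> complex \<Rightarrow> (complex \<Rightarrow> complex) \<Rightarrow> complex \<Rightarrow> complex" where
  "euler_cauchy_lhs M a \<eta> v z =
     z ^ M * (deriv ^^ M) v z + (\<Sum>k = 1..M - 1. a k * z ^ k * (deriv ^^ k) v z) - \<eta> ^ M * v z"

definition log_branch_on :: "(complex \<Rightarrow> complex) \<Rightarrow> complex set \<Rightarrow> bool" where
  "log_branch_on L U \<longleftrightarrow> L holomorphic_on U \<and> (\<forall>z\<in>U. exp (L z) = z)"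

definition wkb_exponent :: "(nat \<Rightarrow> complex) \<Rightarrow> complex \<Rightarrow> complex" where
  "wkb_exponent h \<epsilon> = (\<Sum>k. h k * \<epsilon> powi (int k - 1))"

end

theory Submission
  imports Defs
begin


lemma log_branch_deriv:
  assumes "open U" "log_branch_on L U" "z \<in> U"
  shows "(L has_field_derivative 1 / z) (at z)"
proof -
  have hol: "L holomorphic_on U" and ex: "\<And>w. w \<in> U \<Longrightarrow> exp (L w) = w"
    using assms(2) unfolding log_branch_on_def by auto
  have d: "(L has_field_derivative deriv L z) (at z)"
    using holomorphic_derivI[OF hol assms(1) assms(3)] by simp
  have "((\<lambda>w. exp (L w)) has_field_derivative exp (L z) * deriv L z) (at z)"
    using DERIV_chain2[OF DERIV_exp d] by simp
  then have "((\<lambda>w. w) has_field_derivative exp (L z) * deriv L z) (at z)"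
    by (rule has_field_derivative_transform_within_open[OF _ assms(1) assms(3)]) (simp add: ex)
  then have "exp (L z) * deriv L z = 1"
    using DERIV_ident DERIV_unique by blast
  then have "deriv L z = 1 / z" using ex[OF assms(3)]
    by (metis exp_not_eq_zero eq_divide_eq mult.commute)
  with d show ?thesis by simp
qed

definition ffc :: "complex \<Rightarrow> nat \<Rightarrow> complex" where
  "ffc c k = (\<Prod>i<k. c - of_nat i)"

lemma log_branch_nz: "log_branch_on L U \<Longrightarrow> z \<in> U \<Longrightarrow> z \<noteq> 0"
  unfolding log_branch_on_def by (metis exp_not_eq_zero)

lemma higher_derivs:
  assumes "open U" "log_branch_on L U"
  shows "\<forall>z\<in>U. (deriv ^^ k) (\<lambda>w. exp (c * L w)) z = ffc c k * exp (c * L z) / z ^ k"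
proof (induction k)
  case 0
  then show ?case by (simp add: ffc_def)
next
  case (Suc k)
  show ?case
  proof
    fix z assume z: "z \<in> U"
    have nz: "z \<noteq> 0" using log_branch_nz[OF assms(2) z] .
    have ev: "eventually (\<lambda>w. (deriv ^^ k) (\<lambda>w. exp (c * L w)) w = ffc c k * exp (c * L w) / w ^ k) (nhds z)"
      using Suc eventually_nhds_in_open[OF assms(1) z] by (auto elim: eventually_mono)
    have dL: "(L has_field_derivative 1 / z) (at z)" using log_branch_deriv[OF assms z] .
    have D: "((\<lambda>w. ffc c k * exp (c * L w) / w ^ k) has_field_derivative ffc c (Suc k) * exp (c * L z) / z ^ Suc k) (at z)"
      apply (rule derivative_eq_intros dL refl | simp add: nz)+
      apply (cases k)
       apply (simp_all add: ffc_def field_simps nz)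
      done
    have "(deriv ^^ Suc k) (\<lambda>w. exp (c * L w)) z = deriv ((deriv ^^ k) (\<lambda>w. exp (c * L w))) z" by simp
    also have "\<dots> = deriv (\<lambda>w. ffc c k * exp (c * L w) / w ^ k) z"
      by (rule deriv_cong_ev[OF ev refl])
    also have "\<dots> = ffc c (Suc k) * exp (c * L z) / z ^ Suc k"
      using DERIV_imp_deriv[OF D] .
    finally show "(deriv ^^ Suc k) (\<lambda>w. exp (c * L w)) z = ffc c (Suc k) * exp (c * L z) / z ^ Suc k" .
  qed
qed

lemma exp_lin_indep:
  assumes "finite S" "open W" "W \<noteq> {}"
  shows "inj_on lam S \<Longrightarrow> (\<forall>s\<in>W. (\<Sum>j\<in>S. c j * exp (lam j * s)) = 0) \<Longrightarrow> \<forall>j\<in>S. c j = (0::complex)"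
  using assms(1)
proof (induction S arbitrary: c rule: finite_induct)
  case empty
  then show ?case by simp
next
  case (insert a S)
  have injS: "inj_on lam S" using insert.prems(1) by auto
  have neq: "\<And>j. j \<in> S \<Longrightarrow> lam j \<noteq> lam a" using insert.prems(1) insert.hyps(2) by (auto simp: inj_on_def)
  have Z: "(\<Sum>j\<in>S. (c j * (lam j - lam a)) * exp (lam j * s)) = 0" if s: "s \<in> W" for s
  proof -
    have d1: "((\<lambda>s. \<Sum>j\<in>insert a S. c j * exp (lam j * s)) has_field_derivative
              (\<Sum>j\<in>insert a S. c j * (exp (lam j * s) * lam j))) (at s)"
    proof (rule DERIV_sum)
      fix j assume "j \<in> insert a S"
      show "((\<lambda>s. c j * exp (lam j * s)) has_field_derivative c j * (exp (lam j * s) * lam j)) (at s)"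
        by (auto intro!: derivative_eq_intros)
    qed
    have d2: "((\<lambda>s. \<Sum>j\<in>insert a S. c j * exp (lam j * s)) has_field_derivative 0) (at s)"
      apply (rule has_field_derivative_transform_within_open[OF DERIV_const assms(2) s])
      using insert.prems(2) by simp
    have e1: "(\<Sum>j\<in>insert a S. c j * (exp (lam j * s) * lam j)) = 0"
      using DERIV_unique[OF d1 d2] .
    have e2: "(\<Sum>j\<in>insert a S. c j * exp (lam j * s)) = 0" using insert.prems(2) s by blast
    have "(\<Sum>j\<in>insert a S. (c j * (lam j - lam a)) * exp (lam j * s))
        = (\<Sum>j\<in>insert a S. c j * (exp (lam j * s) * lam j)) - lam a * (\<Sum>j\<in>insert a S. c j * exp (lam j * s))"
    proof -
      have "(\<Sum>j\<in>insert a S. (c j * (lam j - lam a)) * exp (lam j * s))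
          = (\<Sum>j\<in>insert a S. c j * (exp (lam j * s) * lam j) - lam a * (c j * exp (lam j * s)))"
        by (rule sum.cong) (simp_all add: algebra_simps)
      also have "\<dots> = (\<Sum>j\<in>insert a S. c j * (exp (lam j * s) * lam j)) - (\<Sum>j\<in>insert a S. lam a * (c j * exp (lam j * s)))"
        by (rule sum_subtractf)
      also have "\<dots> = (\<Sum>j\<in>insert a S. c j * (exp (lam j * s) * lam j)) - lam a * (\<Sum>j\<in>insert a S. c j * exp (lam j * s))"
        by (simp only: sum_distrib_left)
      finally show ?thesis .
    qed
    also have "\<dots> = 0" using e1 e2 by simp
    finally show ?thesis using insert.hyps by simp
  qed
  have cS: "\<forall>j\<in>S. c j * (lam j - lam a) = 0"
    using insert.IH[OF injS, of "\<lambda>j. c j * (lam j - lam a)"] Z by blast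
  then have cS0: "\<forall>j\<in>S. c j = 0" using neq by auto
  obtain s where s: "s \<in> W" using assms(3) by blast
  have "(\<Sum>j\<in>insert a S. c j * exp (lam j * s)) = 0" using insert.prems(2) s by blast
  then have "c a * exp (lam a * s) = 0" using insert.hyps cS0 by simp
  then have "c a = 0" by simp
  with cS0 show ?case by simp
qed

lemma ffc_scale:
  assumes "t \<noteq> 0"
  shows "t ^ k * ffc (1 / t) k = (\<Prod>i<k. 1 - of_nat i * t)"
proof -
  have "t ^ k * ffc (1 / t) k = (\<Prod>i<k. t) * (\<Prod>i<k. 1 / t - of_nat i)"
    by (simp add: ffc_def)
  also have "\<dots> = (\<Prod>i<k. t * (1 / t - of_nat i))" by (simp add: prod.distrib)
  also have "\<dots> = (\<Prod>i<k. 1 - of_nat i * t)"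
    by (rule prod.cong) (auto simp: assms field_simps)
  finally show ?thesis .
qed

lemma P_scale:
  fixes t :: complex
  assumes "t \<noteq> 0"
  shows "t ^ M * (ffc (1 / t) M + (\<Sum>k = 1..M - 1. a k * ffc (1 / t) k))
       = (\<Prod>i<M. 1 - of_nat i * t) + (\<Sum>k = 1..M - 1. a k * t ^ (M - k) * (\<Prod>i<k. 1 - of_nat i * t))"
proof -
  have "t ^ M * (\<Sum>k = 1..M - 1. a k * ffc (1 / t) k) = (\<Sum>k = 1..M - 1. a k * t ^ (M - k) * (\<Prod>i<k. 1 - of_nat i * t))"
    unfolding sum_distrib_left
  proof (rule sum.cong)
    fix k assume k: "k \<in> {1..M - 1}"
    have "M - k + k = M" using k by auto
    then have "t ^ M = t ^ (M - k) * t ^ k" by (metis power_add)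
    then show "t ^ M * (a k * ffc (1 / t) k) = a k * t ^ (M - k) * (\<Prod>i<k. 1 - of_nat i * t)"
      using ffc_scale[OF assms, of k] by (simp add: mult_ac)
  qed simp
  then show ?thesis using ffc_scale[OF assms, of M] by (simp add: distrib_left)
qed

lemma roots_unity_facts:
  assumes "M > 0"
  shows "inj_on (\<lambda>j. cis (2 * pi * real (j - 1) / real M)) {1..M}"
    and "\<And>j. j \<in> {1..M} \<Longrightarrow> cis (2 * pi * real (j - 1) / real M) ^ M = 1"
proof -
  have B: "bij_betw (\<lambda>k. cis (2 * pi * real k / real M)) {..<M} {z. z ^ M = 1}"
    using Complex.bij_betw_roots_unity[OF assms] .
  have i1: "inj_on (\<lambda>k. cis (2 * pi * real k / real M)) {..<M}" using B bij_betw_def by blast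
  have i2: "inj_on (\<lambda>j::nat. j - 1) {1..M}" by (auto simp: inj_on_def)
  have "(\<lambda>j::nat. j - 1) ` {1..M} \<subseteq> {..<M}" by auto
  then show "inj_on (\<lambda>j. cis (2 * pi * real (j - 1) / real M)) {1..M}"
    using comp_inj_on[OF i2 inj_on_subset[OF i1]] by (simp add: o_def)
  show "\<And>j. j \<in> {1..M} \<Longrightarrow> cis (2 * pi * real (j - 1) / real M) ^ M = 1"
  proof -
    fix j :: nat assume "j \<in> {1..M}"
    then have "j - 1 \<in> {..<M}" by auto
    then show "cis (2 * pi * real (j - 1) / real M) ^ M = 1"
      using bij_betw_apply[OF B] by blast
  qed
qed

theorem theorem6:
  fixes M :: nat and a :: "nat \<Rightarrow> complex"
  assumes "M \<ge> 2"
  shows "\<exists>(h :: nat \<Rightarrow> nat \<Rightarrow> complex) (r :: real).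
    r > 0 \<and>
    (\<forall>j\<in>{1..M}. h j 0 ^ M = 1) \<and> inj_on (\<lambda>j. h j 0) {1..M} \<and>
    (\<forall>\<epsilon>::complex. 0 < norm \<epsilon> \<and> norm \<epsilon> < r \<longrightarrow>
       (\<forall>j\<in>{1..M}. summable (\<lambda>k. h j k * \<epsilon> powi (int k - 1))) \<and>
       (\<forall>(U :: complex set) L. open U \<and> U \<noteq> {} \<and> 0 \<notin> U \<and> log_branch_on L U \<longrightarrow>
          (\<forall>j\<in>{1..M}. \<forall>z\<in>U.
             euler_cauchy_lhs M a (1 / \<epsilon>) (\<lambda>w. exp (wkb_exponent (h j) \<epsilon> * L w)) z = 0) \<and>
          (\<forall>c :: nat \<Rightarrow> complex.
             (\<forall>z\<in>U. (\<Sum>j = 1..M. c j * exp (wkb_exponent (h j) \<epsilon> * L z)) = 0)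
             \<longrightarrow> (\<forall>j\<in>{1..M}. c j = 0))))"
proof -
  have M0: "M > 0" using assms by simp
  define q where "q t = (\<Prod>i<M. 1 - of_nat i * t) + (\<Sum>k = 1..M - 1. a k * t ^ (M - k) * (\<Prod>i<k. 1 - of_nat i * t))" for t :: complex
  define P where "P c = ffc c M + (\<Sum>k = 1..M - 1. a k * ffc c k)" for c
  have q0: "q 0 = 1"
  proof -
    have "(\<Sum>k = 1..M - 1. a k * (0::complex) ^ (M - k) * (\<Prod>i<k. 1 - of_nat i * 0)) = 0"
      by (rule sum.neutral) auto
    then show ?thesis by (simp add: q_def)
  qed
  have Pq: "t ^ M * P (1 / t) = q t" if "t \<noteq> 0" for t
    using P_scale[OF that, of M a] by (simp add: P_def q_def)
  have qcont: "\<And>x. continuous (at x) q" unfolding q_def by (intro continuous_intros)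
  define S where "S = q -` ball 1 1"
  have openS: "open S" unfolding S_def by (rule continuous_open_vimage[OF open_ball qcont])
  have S0: "0 \<in> S" by (simp add: S_def q0)
  have qS: "q t \<notin> \<real>\<^sub>\<le>\<^sub>0 \<and> q t \<noteq> 0" if "t \<in> S" for t
  proof -
    have "cmod (1 - q t) < 1" using that by (simp add: S_def dist_norm)
    moreover have "\<bar>Re (1 - q t)\<bar> \<le> cmod (1 - q t)" by (rule abs_Re_le_cmod)
    ultimately have "Re (q t) > 0" by simp
    then show ?thesis by (auto simp: complex_nonpos_Reals_iff)
  qed
  define E where "E t = exp (- (1 / of_nat M) * Ln (q t))" for t
  have holq: "q holomorphic_on S" unfolding q_def by (intro holomorphic_intros)
  have holE: "E holomorphic_on S" unfolding E_def
    by (intro holomorphic_intros holomorphic_on_Ln' holq) (use qS in auto)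
  have EM: "E t ^ M * q t = 1" if "t \<in> S" for t
  proof -
    have "E t ^ M = exp (of_nat M * (- (1 / of_nat M) * Ln (q t)))"
      unfolding E_def by (rule exp_of_nat_mult[symmetric])
    also have "\<dots> = exp (- Ln (q t))" using M0 by simp
    finally have "E t ^ M * q t = exp (- Ln (q t)) * exp (Ln (q t))" using qS[OF that] by simp
    also have "\<dots> = 1" by (simp add: exp_minus)
    finally show ?thesis .
  qed
  have Enz: "E t \<noteq> 0" for t by (simp add: E_def)
  have E0: "E 0 = 1" by (simp add: E_def q0)
  define G where "G t = t * E t" for t
  have holG: "G holomorphic_on S" unfolding G_def by (intro holomorphic_intros holE)
  have G0: "G 0 = 0" by (simp add: G_def)
  have dE: "(E has_field_derivative deriv E 0) (at 0)" using holomorphic_derivI[OF holE openS S0] by simp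
  have "(G has_field_derivative 1) (at 0)"
    unfolding G_def[abs_def] by (rule derivative_eq_intros dE refl | simp add: E0)+
  then have dG: "deriv G 0 = 1" by (simp add: DERIV_imp_deriv)
  obtain \<rho> where rho: "\<rho> > 0" "ball 0 \<rho> \<subseteq> S" "inj_on G (ball 0 \<rho>)"
    using has_complex_derivative_locally_injective[OF holG S0 openS] dG by auto
  have holGb: "G holomorphic_on ball 0 \<rho>" using holomorphic_on_subset[OF holG rho(2)] .
  obtain g where holg: "g holomorphic_on G ` ball 0 \<rho>" and gG: "\<And>z. z \<in> ball 0 \<rho> \<Longrightarrow> g (G z) = z"
    using holomorphic_has_inverse[OF holGb open_ball rho(3)] by metis
  have openGB: "open (G ` ball 0 \<rho>)" by (rule open_mapping_thm3[OF holGb open_ball rho(3)])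
  have "0 \<in> G ` ball 0 \<rho>" using G0 rho(1) by (metis centre_in_ball image_eqI)
  then obtain r where r: "r > 0" "ball 0 r \<subseteq> G ` ball 0 \<rho>"
    using openGB openE by blast
  define \<omega> where "\<omega> j = cis (2 * pi * real (j - 1) / real M)" for j :: nat
  have n\<omega>: "norm (\<omega> j) = 1" for j by (simp add: \<omega>_def)
  have \<omega>nz: "\<omega> j \<noteq> 0" for j using n\<omega>[of j] by auto
  have T: "g (e / \<omega> j) \<in> ball 0 \<rho> \<and> G (g (e / \<omega> j)) = e / \<omega> j" if "e \<in> ball 0 r" for e j
  proof -
    have "e / \<omega> j \<in> ball 0 r" using that n\<omega>[of j] by (simp add: norm_divide)
    then obtain t where t: "t \<in> ball 0 \<rho>" "e / \<omega> j = G t" using r(2) by blast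
    then show ?thesis using gG[OF t(1)] by simp
  qed
  define \<mu> where "\<mu> j e = \<omega> j * E (g (e / \<omega> j))" for j e
  have hol\<mu>: "\<mu> j holomorphic_on ball 0 r" for j
  proof -
    have h1: "(\<lambda>e. e / \<omega> j) holomorphic_on ball 0 r" by (intro holomorphic_intros) (simp add: \<omega>nz)
    have i1: "(\<lambda>e. e / \<omega> j) ` ball 0 r \<subseteq> G ` ball 0 \<rho>"
      using r(2) n\<omega>[of j] by (auto simp: norm_divide)
    have h2: "(g \<circ> (\<lambda>e. e / \<omega> j)) holomorphic_on ball 0 r"
      by (rule holomorphic_on_compose_gen[OF h1 holg i1])
    have i2: "(g \<circ> (\<lambda>e. e / \<omega> j)) ` ball 0 r \<subseteq> S" using T rho(2) by auto
    have h3: "(E \<circ> (g \<circ> (\<lambda>e. e / \<omega> j))) holomorphic_on ball 0 r"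
      by (rule holomorphic_on_compose_gen[OF h2 holE i2])
    have "(\<lambda>e. \<omega> j * (E \<circ> (g \<circ> (\<lambda>e. e / \<omega> j))) e) holomorphic_on ball 0 r"
      by (intro holomorphic_intros h3)
    then show ?thesis by (simp add: \<mu>_def[abs_def] o_def)
  qed
  define h where "h j k = (deriv ^^ k) (\<mu> j) 0 / fact k" for j k
  have g0: "g 0 = 0" using gG[of 0] G0 rho(1) by simp
  have hj0: "h j 0 = \<omega> j" for j by (simp add: h_def \<mu>_def g0 E0)
  have part1: "\<forall>j\<in>{1..M}. h j 0 ^ M = 1"
    using roots_unity_facts(2)[OF M0] by (simp add: hj0 \<omega>_def)
  have part2: "inj_on (\<lambda>j. h j 0) {1..M}"
    using roots_unity_facts(1)[OF M0] by (simp add: hj0 \<omega>_def[abs_def])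
  have part3: "(\<forall>j\<in>{1..M}. summable (\<lambda>k. h j k * e powi (int k - 1))) \<and>
       (\<forall>(U :: complex set) L. open U \<and> U \<noteq> {} \<and> 0 \<notin> U \<and> log_branch_on L U \<longrightarrow>
          (\<forall>j\<in>{1..M}. \<forall>z\<in>U.
             euler_cauchy_lhs M a (1 / e) (\<lambda>w. exp (wkb_exponent (h j) e * L w)) z = 0) \<and>
          (\<forall>c :: nat \<Rightarrow> complex.
             (\<forall>z\<in>U. (\<Sum>j = 1..M. c j * exp (wkb_exponent (h j) e * L z)) = 0)
             \<longrightarrow> (\<forall>j\<in>{1..M}. c j = 0)))"
    if e: "0 < norm e" "norm e < r" for e
  proof -
    have eb: "e \<in> ball 0 r" using e by simp
    have enz: "e \<noteq> 0" using e by auto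
    have sums_w: "(\<lambda>k. h j k * e powi (int k - 1)) sums (\<mu> j e / e)" for j
    proof -
      have "(\<lambda>n. (deriv ^^ n) (\<mu> j) 0 / fact n * (e - 0) ^ n) sums \<mu> j e"
        by (rule holomorphic_power_series[OF hol\<mu> eb])
      then have "(\<lambda>n. h j n * e ^ n) sums \<mu> j e" by (simp add: h_def)
      then have "(\<lambda>n. h j n * e ^ n / e) sums (\<mu> j e / e)" by (rule sums_divide)
      moreover have "h j n * e ^ n / e = h j n * e powi (int n - 1)" for n
        using enz by (simp add: power_int_diff)
      ultimately show ?thesis by simp
    qed
    have wk: "wkb_exponent (h j) e = \<mu> j e / e" for j
      unfolding wkb_exponent_def using sums_unique[OF sums_w] by simp
    define T where "T j = g (e / \<omega> j)" for j
    have TS: "T j \<in> S" for j using T[OF eb, of j] rho(2) by (auto simp: T_def)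
    have eT: "e = \<omega> j * T j * E (T j)" for j
      using T[OF eb, of j] \<omega>nz[of j] by (simp add: T_def G_def field_simps)
    have Tnz: "T j \<noteq> 0" for j using eT[of j] enz by auto
    have cT: "wkb_exponent (h j) e = 1 / T j" for j
    proof -
      have m: "\<mu> j e = \<omega> j * E (T j)" by (simp add: \<mu>_def T_def)
      have "\<omega> j * E (T j) / e = 1 / T j"
        using eT[of j] \<omega>nz[of j] Enz[of "T j"] Tnz[of j] by (simp add: field_simps)
      then show ?thesis using wk[of j] m by simp
    qed
    have Peq: "P (wkb_exponent (h j) e) = (1 / e) ^ M" if j: "j \<in> {1..M}" for j
    proof -
      have w: "\<omega> j ^ M = 1" using roots_unity_facts(2)[OF M0 j] by (simp add: \<omega>_def)
      have "(1 / e) ^ M = 1 / (\<omega> j ^ M * T j ^ M * E (T j) ^ M)" using eT[of j]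
        by (metis power_mult_distrib power_one_over)
      also have "\<dots> = q (T j) / T j ^ M" using w EM[OF TS[of j]] Tnz[of j] Enz[of "T j"]
        by (simp add: field_simps)
      also have "\<dots> = P (1 / T j)" using Pq[OF Tnz[of j]] Tnz[of j] by (simp add: field_simps)
      finally show ?thesis by (simp add: cT)
    qed
    have injc: "inj_on (\<lambda>j. wkb_exponent (h j) e) {1..M}"
    proof (rule inj_onI)
      fix i j assume ij: "i \<in> {1..M}" "j \<in> {1..M}" "wkb_exponent (h i) e = wkb_exponent (h j) e"
      then have TT: "T i = T j" using Tnz by (simp add: cT)
      have a: "G (T i) = e / \<omega> i" "G (T j) = e / \<omega> j" using T[OF eb] unfolding T_def by auto
      have "e / \<omega> i = G (T i)" using a(1) by (rule sym)
      also have "\<dots> = G (T j)" using TT by (rule arg_cong)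
      also have "\<dots> = e / \<omega> j" using a(2) .
      finally have "e / \<omega> i = e / \<omega> j" .
      then have wij: "\<omega> i = \<omega> j" using enz \<omega>nz by (simp add: field_simps)
      show "i = j" using inj_onD[OF roots_unity_facts(1)[OF M0] wij[unfolded \<omega>_def] ij(1) ij(2)] .
    qed
    show ?thesis
    proof (intro conjI allI impI ballI)
      fix j assume "j \<in> {1..M}"
      show "summable (\<lambda>k. h j k * e powi (int k - 1))" using sums_w by (rule sums_summable)
    next
      fix U :: "complex set" and L j z
      assume UL: "open U \<and> U \<noteq> {} \<and> 0 \<notin> U \<and> log_branch_on L U" and j: "j \<in> {1..M}" and z: "z \<in> U"
      define c where "c = wkb_exponent (h j) e"
      define X where "X = exp (c * L z)"
      have znz: "z \<noteq> 0" using UL z by auto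
      have HD: "(deriv ^^ k) (\<lambda>w. exp (c * L w)) z = ffc c k * X / z ^ k" for k
        using higher_derivs[of U L k c] UL z by (simp add: X_def)
      have "euler_cauchy_lhs M a (1 / e) (\<lambda>w. exp (c * L w)) z
          = z ^ M * (ffc c M * X / z ^ M) + (\<Sum>k = 1..M - 1. a k * z ^ k * (ffc c k * X / z ^ k)) - (1 / e) ^ M * X"
        unfolding euler_cauchy_lhs_def HD X_def ..
      also have "\<dots> = X * (P c - (1 / e) ^ M)"
      proof -
        have "(\<Sum>k = 1..M - 1. a k * z ^ k * (ffc c k * X / z ^ k)) = (\<Sum>k = 1..M - 1. a k * ffc c k) * X"
          unfolding sum_distrib_right by (rule sum.cong) (simp_all add: znz)
        then show ?thesis using znz by (simp add: P_def algebra_simps)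
      qed
      also have "\<dots> = 0" using Peq[OF j] by (simp add: c_def)
      finally show "euler_cauchy_lhs M a (1 / e) (\<lambda>w. exp (wkb_exponent (h j) e * L w)) z = 0"
        by (simp add: c_def)
    next
      fix U :: "complex set" and L and cc :: "nat \<Rightarrow> complex" and j
      assume UL: "open U \<and> U \<noteq> {} \<and> 0 \<notin> U \<and> log_branch_on L U"
        and Z: "\<forall>z\<in>U. (\<Sum>j = 1..M. cc j * exp (wkb_exponent (h j) e * L z)) = 0"
        and j: "j \<in> {1..M}"
      have holL: "L holomorphic_on U" and exL: "\<And>w. w \<in> U \<Longrightarrow> exp (L w) = w"
        using UL unfolding log_branch_on_def by auto
      have injL: "inj_on L U" by (metis exL inj_onI)
      have oW: "open (L ` U)" using open_mapping_thm3[OF holL _ injL] UL by blast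
      have nW: "L ` U \<noteq> {}" using UL by blast
      have "\<forall>s\<in>L ` U. (\<Sum>j\<in>{1..M}. cc j * exp (wkb_exponent (h j) e * s)) = 0" using Z by auto
      then show "cc j = 0"
        using exp_lin_indep[OF finite_atLeastAtMost oW nW injc] j by blast
    qed
  qed
  show ?thesis
    apply (rule exI[of _ h], rule exI[of _ r])
    using r(1) part1 part2 part3 by blast
qed

end
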